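(* Fix an instance $I=\{H,M,\mathbf r\}$ of the offline Notification Timing Problem with $M$ employees and $L=M$ shifts. Let $\mathcal X=\{\mathcal X_i\}_{i\in\mathcal E}$ be any preference profile, and let $B^{\mathcal X}(S)$ denote the total number of (realized) bumps produced by a feasible schedule $S$ under $\mathcal X$. Let $S^*_{\mathcal X}$ be a feasible schedule minimizing $B^{\mathcal X}(S)$, let $S^*_p$ be a feasible schedule minimizing the total number of potential bumps $P(S)$, and let $S^*_I$ be a feasible schedule minimizing $B^{\mathcal I}(S)$, where $\mathcal I$ is the identical-preference profile (all employees have the same strict ranking of shifts). Then $$B^{\mathcal X}(S^*_{\mathcal X})\;\le\; P(S^*_p)\;=\;B^{\mathcal I}(S^*_I).$$
   Context: Employees $\mathcal E=\{1,\dots,M\}$ are ordered by seniority ($i<j$ means $i$ is more senior). Each employee $i$ has a response delay $r_i\in\mathbb Z_{\ge0}$; the horizon is $H\in\mathbb Z_{>0}$. A schedule is $S=(s_i,e_i)_{i\in\mathcal E}$ with notification times $s_i\ge 0$ and response times $e_i=s_i+r_i$; it is feasible if $s_1\le s_2\le\dots\le s_M$ and $e_i\le H$ for all $i$. There are $L=M$ shifts $\mathcal L$, and each employee $i$ has a strict preference order $\mathcal X_i$ over all shifts. Assignment dynamics: responses are processed in increasing order of response time; employees responding at the same time are processed in order of seniority. When an employee $i$ responds (or is bumped), $i$ claims its most preferred shift among those not currently held by an employee more senior than $i$. If that shift is unoccupied, $i$ takes it; if it is held by a junior employee $j>i$, then $i$ takes it, $j$ is bumped (this counts as one bump), and $j$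 immediately repeats the same rule; this may create a chain of bumps. If no shift is available, the employee gets no shift. The total number of bumps $B^{\mathcal X}(S)$ is the total number of such bump events over the whole process. Potential bumps: for a schedule $S$, $p_i=|\{j\in\mathcal E: i<j,\ e_i>e_j\}|$ and $P(S)=\sum_{i\in\mathcal E}p_i$ (the number of pairs in which a senior employee responds strictly later than a junior one). *)

theory Defs
  imports Main
begin

text \<open>Employees are 0,...,M-1 (smaller index = more senior);
shifts are 0,...,M-1 (L = M).  A preference profile assigns to each employee i
a list X i enumerating all shifts, most preferred first.  A schedule is given by
the notification times s :: nat => nat; response times are s i + r i.
An assignment maps each shift to its holder (if any).\<close>

type_synonym assignment = "nat \<Rightarrow> nat option"

definition valid_ranking :: "nat \<Rightarrow> nat list \<Rightarrow> bool" where
  "valid_ranking M xs \<longleftrightarrow> distinct xs \<and> set xs = {0..<M}"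

definition valid_profile :: "nat \<Rightarrow> (nat \<Rightarrow> nat list) \<Rightarrow> bool" where
  "valid_profile M X \<longleftrightarrow> (\<forall>i<M. valid_ranking M (X i))"

definition feasible :: "nat \<Rightarrow> nat \<Rightarrow> (nat \<Rightarrow> nat) \<Rightarrow> (nat \<Rightarrow> nat) \<Rightarrow> bool" where
  "feasible M H r s \<longleftrightarrow>
     (\<forall>i j. i \<le> j \<longrightarrow> j < M \<longrightarrow> s i \<le> s j) \<and> (\<forall>i<M. s i + r i \<le> H)"

text \<open>Employee i claims its most preferred shift not held by a more senior
employee; if that shift is held by a junior j, j is bumped (one bump) and
repeats the rule.  The chain consists of strictly increasing employee indices,
hence has length at most M; the fuel argument (set to M below) is never
exhausted.\<close>

fun claim :: "nat \<Rightarrow> (nat \<Rightarrow> nat list) \<Rightarrow> assignment \<Rightarrow> nat \<Rightarrow> assignment \<times> nat" where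
  "claim 0 X A i = (A, 0)"
| "claim (Suc f) X A i =
     (case find (\<lambda>l. case A l of None \<Rightarrow> True | Some k \<Rightarrow> \<not> k < i) (X i) of
        None \<Rightarrow> (A, 0)
      | Some l \<Rightarrow>
          (case A l of
             None \<Rightarrow> (A(l := Some i), 0)
           | Some j \<Rightarrow> (let (A', b) = claim f X (A(l := Some i)) j in (A', Suc b))))"

text \<open>Responses are processed in increasing order of response time, ties broken
by seniority (sort_key is a stable sort and [0..<M] lists employees by
seniority, so ties in response time keep seniority order).\<close>

definition response_order :: "nat \<Rightarrow> (nat \<Rightarrow> nat) \<Rightarrow> (nat \<Rightarrow> nat) \<Rightarrow> nat list" where
  "response_order M r s = sort_key (\<lambda>i. s i + r i) [0..<M]"

definition total_bumps :: "nat \<Rightarrow> (nat \<Rightarrow> nat) \<Rightarrow> (nat \<Rightarrow> nat list) \<Rightarrow> (nat \<Rightarrow> nat) \<Rightarrow> nat" where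
  "total_bumps M r X s =
     snd (foldl (\<lambda>(A, b) i. (let (A', b') = claim M X A i in (A', b + b')))
                (\<lambda>_. None, 0) (response_order M r s))"

definition potential_bumps :: "nat \<Rightarrow> (nat \<Rightarrow> nat) \<Rightarrow> (nat \<Rightarrow> nat) \<Rightarrow> nat" where
  "potential_bumps M r s =
     card {(i, j). i < j \<and> j < M \<and> s j + r j < s i + r i}"

end

theory Submission
  imports Defs
begin

definition Inv :: "assignment \<Rightarrow> nat set \<Rightarrow> bool" where
 "Inv A P \<longleftrightarrow> (\<forall>l k. A l = Some k \<longrightarrow> k \<in> P) \<and>
     (\<forall>l l' k. A l = Some k \<longrightarrow> A l' = Some k \<longrightarrow> l = l')"

lemma claim_bound:
  "Inv A P \<Longrightarrow> finite P \<Longrightarrow> c \<notin> P \<Longrightarrow> claim f X A c = (A', b)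
   \<Longrightarrow> Inv A' (insert c P) \<and> b \<le> card {j\<in>P. c < j}"
proof (induction f arbitrary: A P c A' b)
  case 0
  then show ?case by (auto simp: Inv_def)
next
  case (Suc f)
  show ?case
  proof (cases "find (\<lambda>l. case A l of None \<Rightarrow> True | Some k \<Rightarrow> \<not> k < c) (X c)")
    case None
    then show ?thesis using Suc.prems by (auto simp: Inv_def)
  next
    case (Some l)
    note fnd = this
    from fnd have fl: "case A l of None \<Rightarrow> True | Some k \<Rightarrow> \<not> k < c"
      by (auto simp: find_Some_iff)
    show ?thesis
    proof (cases "A l")
      case None
      then have "A' = A(l := Some c)" "b = 0" using Suc.prems fnd by auto
      then show ?thesis using Suc.prems None by (auto simp: Inv_def)
    next
      case (Some j)
      have jP: "j \<in> P" using Some Suc.prems(1) by (auto simp: Inv_def)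
      have cj: "c < j" using fl Some jP Suc.prems(3) by (cases "c = j") auto
      obtain A'' b'' where rec: "claim f X (A(l := Some c)) j = (A'', b'')"
        by (cases "claim f X (A(l := Some c)) j")
      have ab: "A' = A''" "b = Suc b''" using Suc.prems(4) fnd Some rec by auto
      have inv2: "Inv (A(l := Some c)) (insert c (P - {j}))"
        unfolding Inv_def
      proof (intro conjI allI impI)
        fix l' k assume a: "(A(l := Some c)) l' = Some k"
        show "k \<in> insert c (P - {j})"
        proof (cases "l' = l")
          case True then show ?thesis using a by simp
        next
          case False
          then have "A l' = Some k" using a by simp
          moreover have "k \<noteq> j" using False Some Suc.prems(1) \<open>A l' = Some k\<close> unfolding Inv_def by blast
          ultimately show ?thesis using Suc.prems(1) unfolding Inv_def by blast
        qed
      next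
        fix l1 l2 k assume a1: "(A(l := Some c)) l1 = Some k" and a2: "(A(l := Some c)) l2 = Some k"
        have nc: "\<And>l''. A l'' \<noteq> Some c" using Suc.prems(1,3) unfolding Inv_def by blast
        show "l1 = l2"
          using a1 a2 nc Suc.prems(1) unfolding Inv_def
          by (cases "l1 = l"; cases "l2 = l") (auto)
      qed
      have fin2: "finite (insert c (P - {j}))" using Suc.prems(2) by simp
      have jn: "j \<notin> insert c (P - {j})" using cj by auto
      from Suc.IH[OF inv2 fin2 jn rec]
      have ih: "Inv A'' (insert j (insert c (P - {j})))" "b'' \<le> card {k \<in> insert c (P - {j}). j < k}"
        by auto
      have e1: "insert j (insert c (P - {j})) = insert c P" using jP by auto
      have e2: "{k \<in> insert c (P - {j}). j < k} = {k\<in>P. j < k}" using cj by auto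
      have "{k\<in>P. j < k} \<subset> {k\<in>P. c < k}" using cj jP by auto
      then have "card {k\<in>P. j < k} < card {k\<in>P. c < k}"
        using Suc.prems(2) by (intro psubset_card_mono) auto
      then show ?thesis using ih e1 e2 ab by auto
    qed
  qed
qed


fun cnt :: "nat set \<Rightarrow> nat list \<Rightarrow> nat" where
  "cnt P [] = 0"
| "cnt P (x#xs) = card {j\<in>P. x<j} + cnt (insert x P) xs"

definition F :: "nat \<Rightarrow> (nat \<Rightarrow> nat list) \<Rightarrow> assignment \<times> nat \<Rightarrow> nat \<Rightarrow> assignment \<times> nat" where
  "F M X = (\<lambda>(A, b) i. (let (A', b') = claim M X A i in (A', b + b')))"

lemma total_bumps_F: "total_bumps M r X s = snd (foldl (F M X) (\<lambda>_. None, 0) (response_order M r s))"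
  by (simp add: total_bumps_def F_def)

lemma fold_bound:
  "Inv A P \<Longrightarrow> finite P \<Longrightarrow> set xs \<inter> P = {} \<Longrightarrow> distinct xs
   \<Longrightarrow> snd (foldl (F M X) (A, b) xs) \<le> b + cnt P xs"
proof (induction xs arbitrary: A P b)
  case Nil then show ?case by simp
next
  case (Cons x xs)
  obtain A' b' where cl: "claim M X A x = (A', b')" by (cases "claim M X A x")
  have h: "Inv A' (insert x P) \<and> b' \<le> card {j\<in>P. x<j}"
    using claim_bound[OF Cons.prems(1,2) _ cl] Cons.prems(3) by auto
  have f: "F M X (A,b) x = (A', b + b')" using cl by (simp add: F_def)
  have "snd (foldl (F M X) (A', b + b') xs) \<le> b + b' + cnt (insert x P) xs"
    using Cons.IH[of A' "insert x P" "b+b'"] Cons.prems h by auto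
  then show ?case using f h by simp
qed

lemma cnt_eq:
  fixes e :: "nat \<Rightarrow> nat"
  assumes "sorted_wrt (\<lambda>a b. e a < e b \<or> (e a = e b \<and> a < b)) xs" "distinct xs" "finite P"
    "\<forall>p\<in>P. \<forall>x\<in>set xs. e p < e x \<or> (e p = e x \<and> p < x)" "P \<inter> set xs = {}"
  shows "cnt P xs = card {(i,j). i \<in> set xs \<and> j \<in> P \<union> set xs \<and> i < j \<and> e j < e i}"
using assms proof (induction xs arbitrary: P)
  case Nil then show ?case by simp
next
  case (Cons x xs)
  let ?S1 = "Pair x ` {j\<in>P. x<j}"
  let ?S' = "{(i,j). i \<in> set xs \<and> j \<in> insert x P \<union> set xs \<and> i < j \<and> e j < e i}"
  have eq: "{(i,j). i \<in> set (x#xs) \<and> j \<in> P \<union> set (x#xs) \<and> i < j \<and> e j < e i} = ?S1 \<union> ?S'"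
  proof
    show "{(i,j). i \<in> set (x#xs) \<and> j \<in> P \<union> set (x#xs) \<and> i < j \<and> e j < e i} \<subseteq> ?S1 \<union> ?S'"
    proof
      fix p assume pin: "p \<in> {(i,j). i \<in> set (x#xs) \<and> j \<in> P \<union> set (x#xs) \<and> i < j \<and> e j < e i}"
      obtain i j where pij: "p = (i,j)" by (cases p)
      have a: "i \<in> set (x#xs)" "j \<in> P \<union> set (x#xs)" "i < j" "e j < e i" using pin pij by auto
      have "(i,j) \<in> ?S1 \<union> ?S'"
      proof (cases "i = x")
        case True
        have "j \<notin> set xs" using Cons.prems(1) True a(3,4) by auto
        then show ?thesis using True a by auto
      next
        case False then show ?thesis using a by auto
      qed
      then show "p \<in> ?S1 \<union> ?S'" using pij by simp
    qed
  next
    show "?S1 \<union> ?S' \<subseteq> {(i,j). i \<in> set (x#xs) \<and> j \<in> P \<union> set (x#xs) \<and> i < j \<and> e j < e i}"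
      using Cons.prems(4) by fastforce
  qed
  have fin1: "finite ?S1" using Cons.prems(3) by simp
  have "?S' \<subseteq> set xs \<times> (insert x P \<union> set xs)" by auto
  then have fin2: "finite ?S'" using Cons.prems(3) by (meson finite_Un finite_SigmaI finite_insert finite_set rev_finite_subset)
  have disj: "?S1 \<inter> ?S' = {}" using Cons.prems(2) by auto
  have c1: "card ?S1 = card {j\<in>P. x<j}" by (simp add: card_image inj_on_def)
  have IH: "cnt (insert x P) xs = card ?S'"
    using Cons.IH[of "insert x P"] Cons.prems by auto
  show ?case using eq fin1 fin2 disj c1 IH by (simp add: card_Un_disjoint)
qed

lemma sorted_K_insort:
  assumes "sorted_wrt (\<lambda>a b. f a < f b \<or> (f a = f b \<and> a < b)) ys" "\<forall>y\<in>set ys. (x::nat) < y"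
  shows "sorted_wrt (\<lambda>a b. f a < f b \<or> (f a = f b \<and> a < b)) (insort_key f x ys)"
using assms proof (induction ys)
  case Nil then show ?case by simp
next
  case (Cons y ys)
  show ?case
  proof (cases "f x \<le> f y")
    case True
    have "\<forall>z\<in>set ys. f y \<le> f z" using Cons.prems(1) by auto
    then show ?thesis using True Cons.prems by (auto simp: le_less)
  next
    case False
    then show ?thesis using Cons by (auto simp: set_insort_key)
  qed
qed

lemma sorted_K_sort:
  "sorted_wrt (<) (xs::nat list) \<Longrightarrow> sorted_wrt (\<lambda>a b. (f::nat\<Rightarrow>nat) a < f b \<or> (f a = f b \<and> a < b)) (sort_key f xs)"
proof (induction xs)
  case Nil then show ?case by simp
next
  case (Cons x xs)
  then show ?case by (auto intro!: sorted_K_insort)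
qed

lemma cnt_pb: "cnt {} (response_order M r s) = potential_bumps M r s"
proof -
  let ?os = "response_order M r s"
  let ?e = "\<lambda>i. s i + r i"
  have so: "sorted_wrt (\<lambda>a b. ?e a < ?e b \<or> (?e a = ?e b \<and> a < b)) ?os"
    unfolding response_order_def by (rule sorted_K_sort) simp
  have "cnt {} ?os = card {(i,j). i \<in> set ?os \<and> j \<in> {} \<union> set ?os \<and> i < j \<and> ?e j < ?e i}"
    by (rule cnt_eq[OF so]) (auto simp: response_order_def)
  also have "{(i,j). i \<in> set ?os \<and> j \<in> {} \<union> set ?os \<and> i < j \<and> ?e j < ?e i}
      = {(i, j). i < j \<and> j < M \<and> ?e j < ?e i}"
    by (auto simp: response_order_def)
  finally show ?thesis by (simp add: potential_bumps_def)
qed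

lemma tb_le: "total_bumps M r X s \<le> potential_bumps M r s"
proof -
  have "total_bumps M r X s \<le> 0 + cnt {} (response_order M r s)"
    unfolding total_bumps_F
    by (rule fold_bound) (auto simp: Inv_def response_order_def)
  then show ?thesis using cnt_pb by simp
qed


fun mkA :: "nat list \<Rightarrow> nat list \<Rightarrow> assignment" where
  "mkA [] ps = (\<lambda>_. None)"
| "mkA (x#xs) [] = (\<lambda>_. None)"
| "mkA (x#xs) (p#ps) = (mkA xs ps)(x := Some p)"

lemma mkA_notin: "l \<notin> set \<sigma> \<Longrightarrow> mkA \<sigma> ps l = None"
  by (induction \<sigma> ps rule: mkA.induct) auto

lemma mkA_nth: "distinct \<sigma> \<Longrightarrow> k < length \<sigma> \<Longrightarrow>
   mkA \<sigma> ps (\<sigma>!k) = (if k < length ps then Some (ps!k) else None)"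
proof (induction \<sigma> ps arbitrary: k rule: mkA.induct)
  case (1 ps) then show ?case by simp
next
  case (2 x xs) then show ?case by simp
next
  case (3 x xs p ps)
  show ?case
  proof (cases k)
    case 0 then show ?thesis by simp
  next
    case (Suc k')
    then have "xs ! k' \<noteq> x" using 3(2,3) by (auto simp: nth_mem)
    then show ?thesis using 3 Suc by auto
  qed
qed

lemma mkA_eqI:
  assumes "distinct \<sigma>" "\<forall>k<length \<sigma>. f (\<sigma>!k) = (if k < length ps then Some (ps!k) else None)"
    "\<forall>l. l \<notin> set \<sigma> \<longrightarrow> f l = None"
  shows "f = mkA \<sigma> ps"
proof
  fix l show "f l = mkA \<sigma> ps l"
  proof (cases "l \<in> set \<sigma>")
    case True then obtain k where "k < length \<sigma>" "l = \<sigma>!k" by (auto simp: in_set_conv_nth)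
    then show ?thesis using assms mkA_nth by auto
  next
    case False then show ?thesis using assms mkA_notin by auto
  qed
qed

lemma mkA_upd:
  assumes "distinct \<sigma>" "length lo < length \<sigma>"
  shows "(mkA \<sigma> (lo @ hi))(\<sigma> ! length lo := Some c) = mkA \<sigma> (lo @ c # drop 1 hi)"
proof -
  have A: "\<forall>k<length \<sigma>. ((mkA \<sigma> (lo @ hi))(\<sigma> ! length lo := Some c)) (\<sigma> ! k) =
    (if k < length (lo @ c # drop 1 hi) then Some ((lo @ c # drop 1 hi) ! k) else None)"
  proof (intro allI impI)
  fix k assume k: "k < length \<sigma>"
  show "((mkA \<sigma> (lo @ hi))(\<sigma> ! length lo := Some c)) (\<sigma> ! k) =
    (if k < length (lo @ c # drop 1 hi) then Some ((lo @ c # drop 1 hi) ! k) else None)"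
  proof (cases "k = length lo")
    case True then show ?thesis by simp
  next
    case False
    then have "\<sigma> ! k \<noteq> \<sigma> ! length lo" using assms k by (simp add: nth_eq_iff_index_eq)
    then have "((mkA \<sigma> (lo @ hi))(\<sigma> ! length lo := Some c)) (\<sigma> ! k) = mkA \<sigma> (lo @ hi) (\<sigma> ! k)" by simp
    also have "\<dots> = (if k < length (lo @ hi) then Some ((lo @ hi) ! k) else None)"
      using mkA_nth assms k by blast
    also have "\<dots> = (if k < length (lo @ c # drop 1 hi) then Some ((lo @ c # drop 1 hi) ! k) else None)"
    proof (cases "k < length lo")
      case True then show ?thesis by (simp add: nth_append)
    next
      case f2: False
      then obtain d where d: "k = length lo + Suc d" using False by (metis add_Suc_right less_imp_Suc_add linorder_neqE_nat)
      show ?thesis by (cases hi) (auto simp: d nth_append)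
    qed
    finally show ?thesis .
  qed
  qed
  have B: "\<forall>l. l \<notin> set \<sigma> \<longrightarrow> ((mkA \<sigma> (lo @ hi))(\<sigma> ! length lo := Some c)) l = None"
    using assms by (auto simp: mkA_notin)
  show ?thesis using mkA_eqI[OF assms(1) A B] .
qed

lemma find_mkA:
  assumes "distinct \<sigma>" "\<forall>y\<in>set lo. y < c" "\<forall>y\<in>set hi. c < y" "length lo + length hi < length \<sigma>"
  shows "find (\<lambda>l. case mkA \<sigma> (lo@hi) l of None \<Rightarrow> True | Some k \<Rightarrow> \<not> k < c) \<sigma> = Some (\<sigma> ! length lo)"
  unfolding find_Some_iff
proof (intro exI conjI allI impI)
  show "length lo < length \<sigma>" using assms by simp
  show "case mkA \<sigma> (lo@hi) (\<sigma> ! length lo) of None \<Rightarrow> True | Some k \<Rightarrow> \<not> k < c"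
    using assms mkA_nth[OF assms(1), of "length lo" "lo@hi"]
    by (cases hi) (auto simp: nth_append)
  show "\<sigma> ! length lo = \<sigma> ! length lo" by simp
  fix j assume j: "j < length lo"
  then have "mkA \<sigma> (lo@hi) (\<sigma> ! j) = Some (lo ! j)"
    using assms mkA_nth[OF assms(1), of j "lo@hi"] by (auto simp: nth_append)
  then show "\<not> (case mkA \<sigma> (lo@hi) (\<sigma> ! j) of None \<Rightarrow> True | Some k \<Rightarrow> \<not> k < c)"
    using assms(2) j by (auto simp: nth_mem)
qed

lemma claim_ident:
  assumes "distinct \<sigma>" "sorted_wrt (<) (lo @ hi)" "\<forall>y\<in>set lo. y < c" "\<forall>y\<in>set hi. c < y"
    "length lo + length hi < length \<sigma>" "length hi < f"
  shows "claim f (\<lambda>_. \<sigma>) (mkA \<sigma> (lo @ hi)) c = (mkA \<sigma> (lo @ c # hi), length hi)"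
using assms proof (induction hi arbitrary: lo c f)
  case Nil
  then obtain f' where f: "f = Suc f'" by (cases f) auto
  have fd: "find (\<lambda>l. case mkA \<sigma> (lo@[]) l of None \<Rightarrow> True | Some k \<Rightarrow> \<not> k < c) \<sigma> = Some (\<sigma> ! length lo)"
    using find_mkA[of \<sigma> lo c "[]"] Nil.prems by simp
  have nn: "mkA \<sigma> lo (\<sigma> ! length lo) = None" using mkA_nth[of \<sigma> "length lo" lo] Nil.prems by simp
  have up: "(mkA \<sigma> (lo @ []))(\<sigma> ! length lo := Some c) = mkA \<sigma> (lo @ c # drop 1 [])"
    using mkA_upd[of \<sigma> lo "[]" c] Nil.prems by simp
  show ?case using fd nn up by (simp add: f)
next
  case (Cons j hi)
  then obtain f' where f: "f = Suc f'" by (cases f) auto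
  have fd: "find (\<lambda>l. case mkA \<sigma> (lo@j#hi) l of None \<Rightarrow> True | Some k \<Rightarrow> \<not> k < c) \<sigma> = Some (\<sigma> ! length lo)"
    using find_mkA[of \<sigma> lo c "j#hi"] Cons.prems by simp
  have nn: "mkA \<sigma> (lo@j#hi) (\<sigma> ! length lo) = Some j"
    using mkA_nth[of \<sigma> "length lo" "lo@j#hi"] Cons.prems by simp
  have up: "(mkA \<sigma> (lo @ j # hi))(\<sigma> ! length lo := Some c) = mkA \<sigma> ((lo @ [c]) @ hi)"
    using mkA_upd[of \<sigma> lo "j#hi" c] Cons.prems by simp
  have ih: "claim f' (\<lambda>_. \<sigma>) (mkA \<sigma> ((lo @ [c]) @ hi)) j = (mkA \<sigma> ((lo @ [c]) @ j # hi), length hi)"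
  proof (rule Cons.IH)
    show "distinct \<sigma>" using Cons.prems by simp
    show "sorted_wrt (<) ((lo @ [c]) @ hi)" using Cons.prems(2,3,4) by (auto simp: sorted_wrt_append)
    show "\<forall>y\<in>set (lo @ [c]). y < j" using Cons.prems(3,4) by fastforce
    show "\<forall>y\<in>set hi. j < y" using Cons.prems(2) by (auto simp: sorted_wrt_append)
    show "length (lo @ [c]) + length hi < length \<sigma>" using Cons.prems(5) by simp
    show "length hi < f'" using Cons.prems(6) f by simp
  qed
  show ?case using fd nn up ih by (simp add: f)
qed

lemma split_sorted: "sorted_wrt (<) (ps::nat list) \<Longrightarrow> c \<notin> set ps \<Longrightarrow>
   filter (\<lambda>y. y < c) ps @ filter (\<lambda>y. c < y) ps = ps"
proof (induction ps)
  case Nil then show ?case by simp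
next
  case (Cons x xs)
  show ?case
  proof (cases "x < c")
    case True then show ?thesis using Cons by auto
  next
    case False
    then have "c < x" using Cons.prems by auto
    then have "\<forall>y\<in>set xs. c < y" using Cons.prems by auto
    then show ?thesis using \<open>c < x\<close> by (fastforce simp: filter_empty_conv)
  qed
qed

lemma fold_ident:
  assumes "distinct \<sigma>" "length \<sigma> = M" "sorted_wrt (<) ps" "set ps \<union> set xs \<subseteq> {0..<M}"
    "set xs \<inter> set ps = {}" "distinct xs"
  shows "snd (foldl (F M (\<lambda>_. \<sigma>)) (mkA \<sigma> ps, b) xs) = b + cnt (set ps) xs"
using assms proof (induction xs arbitrary: ps b)
  case Nil then show ?case by simp
next
  case (Cons x xs)
  let ?lo = "filter (\<lambda>y. y < x) ps" and ?hi = "filter (\<lambda>y. x < y) ps"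
  have xn: "x \<notin> set ps" using Cons.prems by auto
  have sp: "?lo @ ?hi = ps" using split_sorted[OF Cons.prems(3) xn] .
  have dps: "distinct ps" using Cons.prems(3) by (simp add: strict_sorted_iff)
  have "set ps \<subseteq> {0..<M} - {x}" using Cons.prems(4) xn by auto
  then have "card (set ps) \<le> card ({0..<M} - {x})" by (intro card_mono) auto
  moreover have "x < M" using Cons.prems(4) by auto
  ultimately have lps: "length ps < M" using distinct_card[OF dps] by simp
  have lh: "length ?hi = card {j\<in>set ps. x<j}"
    using distinct_card[of ?hi] dps by simp
  have cl: "claim M (\<lambda>_. \<sigma>) (mkA \<sigma> ps) x = (mkA \<sigma> (?lo @ x # ?hi), length ?hi)"
  proof -
    have "claim M (\<lambda>_. \<sigma>) (mkA \<sigma> (?lo @ ?hi)) x = (mkA \<sigma> (?lo @ x # ?hi), length ?hi)"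
    proof (rule claim_ident)
      show "distinct \<sigma>" using Cons.prems by simp
      show "sorted_wrt (<) (?lo @ ?hi)" using sp Cons.prems(3) by simp
      show "length ?lo + length ?hi < length \<sigma>" using sp lps Cons.prems(2) by (metis length_append)
      show "length ?hi < M" using lps by (metis le_less_trans length_filter_le)
    qed auto
    then show ?thesis using sp by simp
  qed
  have fx: "F M (\<lambda>_. \<sigma>) (mkA \<sigma> ps, b) x = (mkA \<sigma> (?lo @ x # ?hi), b + length ?hi)"
    using cl by (simp add: F_def)
  have so: "sorted_wrt (<) (?lo @ x # ?hi)"
    using Cons.prems(3) by (auto simp: sorted_wrt_append sorted_wrt_filter)
  have st: "set (?lo @ x # ?hi) = insert x (set ps)" using sp xn
    by (metis (no_types, lifting) Un_insert_right list.simps(15) set_append)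
  have "snd (foldl (F M (\<lambda>_. \<sigma>)) (mkA \<sigma> (?lo @ x # ?hi), b + length ?hi) xs)
      = b + length ?hi + cnt (set (?lo @ x # ?hi)) xs"
    using Cons.IH[OF Cons.prems(1,2) so] Cons.prems st by auto
  then show ?case using fx st lh by simp
qed

lemma tb_eq:
  assumes "valid_ranking M \<sigma>"
  shows "total_bumps M r (\<lambda>_. \<sigma>) s = potential_bumps M r s"
proof -
  have d: "distinct \<sigma>" and l: "length \<sigma> = M" using assms
    by (auto simp: valid_ranking_def dest: distinct_card)
  have e: "mkA \<sigma> [] = (\<lambda>_. None)" by (cases \<sigma>) auto
  have "total_bumps M r (\<lambda>_. \<sigma>) s = 0 + cnt (set []) (response_order M r s)"
    unfolding total_bumps_F e[symmetric]
    by (rule fold_ident[OF d l]) (auto simp: response_order_def)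
  then show ?thesis using cnt_pb by simp
qed

theorem theorem1:
  fixes M H :: nat and r :: "nat \<Rightarrow> nat" and X :: "nat \<Rightarrow> nat list" and \<sigma> :: "nat list"
    and sX sp sI :: "nat \<Rightarrow> nat"
  assumes H: "0 < H"
    and X: "valid_profile M X"
    and \<sigma>: "valid_ranking M \<sigma>"
    and sX_feas: "feasible M H r sX"
    and sX_opt: "\<forall>s. feasible M H r s \<longrightarrow> total_bumps M r X sX \<le> total_bumps M r X s"
    and sp_feas: "feasible M H r sp"
    and sp_opt: "\<forall>s. feasible M H r s \<longrightarrow> potential_bumps M r sp \<le> potential_bumps M r s"
    and sI_feas: "feasible M H r sI"
    and sI_opt: "\<forall>s. feasible M H r s \<longrightarrow>
                   total_bumps M r (\<lambda>_. \<sigma>) sI \<le> total_bumps M r (\<lambda>_. \<sigma>) s"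
  shows "total_bumps M r X sX \<le> potential_bumps M r sp
       \<and> potential_bumps M r sp = total_bumps M r (\<lambda>_. \<sigma>) sI"
proof
  show "total_bumps M r X sX \<le> potential_bumps M r sp"
    using sX_opt sp_feas tb_le[of M r X sp] by (meson le_trans)
  have "potential_bumps M r sp \<le> potential_bumps M r sI" using sp_opt sI_feas by blast
  moreover have "total_bumps M r (\<lambda>_. \<sigma>) sI \<le> total_bumps M r (\<lambda>_. \<sigma>) sp" using sI_opt sp_feas by blast
  ultimately show "potential_bumps M r sp = total_bumps M r (\<lambda>_. \<sigma>) sI"
    using tb_eq[OF \<sigma>, of r sI] tb_eq[OF \<sigma>, of r sp] by simp
qed

end
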